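(* Let $K\ge 3$ be odd, $a,b\ge1$ integers, $M\ge0$. For the $(K,a,b)$ coded caching problem for location-based content, $R^\star\ge \dfrac{K-1}{2}-\dfrac{K-1}{2(2a+b)}M$.
   Context: For integers $x\le y$, $[x:y]=\{x,x+1,\dots,y\}$ and $[n]=[1:n]$. For integers $c$ and $m\ge1$, $\langle c\rangle_m$ denotes the unique element of $\{1,\dots,m\}$ congruent to $c$ modulo $m$. The $(K,a,b)$ coded caching problem for location-based content: a server has $N=K(a+b)$ files $W_1,\dots,W_N$, each consisting of $B$ independent uniformly distributed bits. There are $K$ cache nodes, each storing $MB$ bits, and $K$ users, user $k$ having free access to cache node $k$ only. For $k\in[K]$ define $\mathcal D_{k,1}=[(k-1)(a+b)+1:ka+(k-1)b]$, $\mathcal D_{k,2}=[ka+(k-1)b+1:k(a+b)]$, $\mathcal D_{k,3}=\mathcal D_{\langle k+1\rangle_K,1}$, and $\mathcal D_k=\mathcal D_{k,1}\cup\mathcal D_{k,2}\cup\mathcal D_{k,3}$. A scheme consists of: placement functions $Z_k=\phi_k(W_1,\dots,W_N)\in\{0,1\}^{MB}$, chosen without knowledge of demands; for every demand vector $\mathbf d=(d_1,\dots,d_K)\in\mathcal D_1\times\cdots\times\mathcal D_K$, a transmitted message $X=\psi(\mathbf d,W_1,\dots,W_N)\in\{0,1\}^{RB}$; and decoding functions such that user $k$ recovers $W_{d_k}$ exactly from $(\mathbf d,Z_k,X)$ for every $\mathbf d$ and $k$. $R$ is the worst-case load and $R^\star$ is the infimum of $R$ over all schemes (and all $B$). *)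

theory Defs
  imports Complex_Main
begin

definition cyc :: "int \<Rightarrow> int \<Rightarrow> int" where
  "cyc c m = ((c - 1) mod m) + 1"

definition D1 :: "nat \<Rightarrow> nat \<Rightarrow> nat \<Rightarrow> nat set" where
  "D1 a b k = {(k - 1) * (a + b) + 1 .. k * a + (k - 1) * b}"

definition D2 :: "nat \<Rightarrow> nat \<Rightarrow> nat \<Rightarrow> nat set" where
  "D2 a b k = {k * a + (k - 1) * b + 1 .. k * (a + b)}"

definition D3 :: "nat \<Rightarrow> nat \<Rightarrow> nat \<Rightarrow> nat \<Rightarrow> nat set" where
  "D3 K a b k = D1 a b (nat (cyc (int k + 1) (int K)))"

definition Dset :: "nat \<Rightarrow> nat \<Rightarrow> nat \<Rightarrow> nat \<Rightarrow> nat set" where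
  "Dset K a b k = D1 a b k \<union> D2 a b k \<union> D3 K a b k"

text \<open>File realizations: N files of B bits each, indexed 1..N (junk indices fixed to []).\<close>
definition file_configs :: "nat \<Rightarrow> nat \<Rightarrow> (nat \<Rightarrow> bool list) set" where
  "file_configs N B = {W. \<forall>i. (i \<in> {1..N} \<longrightarrow> length (W i) = B) \<and> (i \<notin> {1..N} \<longrightarrow> W i = [])}"

definition demands :: "nat \<Rightarrow> nat \<Rightarrow> nat \<Rightarrow> (nat \<Rightarrow> nat) set" where
  "demands K a b = {d. \<forall>k. (k \<in> {1..K} \<longrightarrow> d k \<in> Dset K a b k) \<and> (k \<notin> {1..K} \<longrightarrow> d k = 0)}"

text \<open>A scheme with file size B bits, cache size m bits per node and message length L bits:
  placement phi, delivery psi, decoders mu (user k sees only d, Z_k and X).\<close>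
definition is_scheme ::
  "nat \<Rightarrow> nat \<Rightarrow> nat \<Rightarrow> nat \<Rightarrow> nat \<Rightarrow> nat \<Rightarrow>
   (nat \<Rightarrow> (nat \<Rightarrow> bool list) \<Rightarrow> bool list) \<Rightarrow>
   ((nat \<Rightarrow> nat) \<Rightarrow> (nat \<Rightarrow> bool list) \<Rightarrow> bool list) \<Rightarrow>
   (nat \<Rightarrow> (nat \<Rightarrow> nat) \<Rightarrow> bool list \<Rightarrow> bool list \<Rightarrow> bool list) \<Rightarrow> bool" where
  "is_scheme K a b B m L phi psi mu \<longleftrightarrow>
     (\<forall>W \<in> file_configs (K * (a + b)) B.
        (\<forall>k \<in> {1..K}. length (phi k W) = m) \<and>
        (\<forall>d \<in> demands K a b. length (psi d W) = L \<and>
            (\<forall>k \<in> {1..K}. mu k d (phi k W) (psi d W) = W (d k))))"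

text \<open>Achievable loads R = L/B with cache memory M (i.e. at most M*B bits per cache).\<close>
definition achievable_loads :: "nat \<Rightarrow> nat \<Rightarrow> nat \<Rightarrow> real \<Rightarrow> real set" where
  "achievable_loads K a b M =
     {real L / real B | B m L. B \<ge> 1 \<and> real m \<le> M * real B \<and>
        (\<exists>phi psi mu. is_scheme K a b B m L phi psi mu)}"

definition Rstar :: "nat \<Rightarrow> nat \<Rightarrow> nat \<Rightarrow> real \<Rightarrow> real" where
  "Rstar K a b M = Inf (achievable_loads K a b M)"

end

theory Submission
  imports Defs "HOL-Library.FuncSet"
begin

definition Wf :: "nat \<Rightarrow> nat \<Rightarrow> nat \<Rightarrow> nat \<Rightarrow> nat \<Rightarrow> (nat \<times> nat \<Rightarrow> bool list) \<Rightarrow> nat \<Rightarrow> bool list" where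
  "Wf N B c t n g f = (if 1 \<le> f \<and> f \<le> N then
      (if (f-1) div c < t \<and> (f-1) mod c < n then g ((f-1) div c, (f-1) mod c) else replicate B False)
     else [])"

definition dem :: "nat \<Rightarrow> nat \<Rightarrow> nat \<Rightarrow> nat \<Rightarrow> nat \<Rightarrow> nat" where
  "dem K a b j k = (if 1 \<le> k \<and> k \<le> K then (k-1)*(a+b)+1 + (if k < K then j else 0) else 0)"

lemma dem_ok:
  assumes "j < 2*a+b" "a \<ge> 1" "K \<ge> 1"
  shows "dem K a b j \<in> demands K a b"
  unfolding demands_def
proof (intro CollectI allI conjI impI)
  fix k assume "k \<notin> {1..K}" then show "dem K a b j k = 0" by (auto simp: dem_def)
next
  fix k assume k: "k \<in> {1..K}"
  then obtain k' where k': "k = Suc k'" by (cases k) auto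
  show "dem K a b j k \<in> Dset K a b k"
  proof (cases "k < K")
    case True
    have v: "dem K a b j k = k'*(a+b)+1+j" using k True k' by (simp add: dem_def)
    show ?thesis
    proof (cases "j < a+b")
      case True
      then show ?thesis unfolding v unfolding Dset_def D1_def D2_def k'
        by (auto simp: algebra_simps)
    next
      case False
      have "cyc (int k + 1) (int K) = int k + 1"
        unfolding cyc_def using True by simp
      moreover have "nat (int k + 1) = Suc k" by simp
      ultimately have "D3 K a b k = D1 a b (Suc k)" unfolding D3_def by simp
      then show ?thesis using False assms(1) unfolding v unfolding Dset_def D1_def k'
        by (auto simp: algebra_simps)
    qed
  next
    case False
    then have "k = K" using k by auto
    moreover have "K - 1 = k'" using k' \<open>k = K\<close> by simp
    ultimately have v: "dem K a b j k = k'*(a+b)+1" using k k' by (simp add: dem_def)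
    show ?thesis unfolding v unfolding Dset_def D1_def k' using assms(2) by (auto simp: algebra_simps)
  qed
qed

lemma card_len: "card {x::bool list. length x = m} = 2^m"
  using card_lists_length_eq[of "UNIV :: bool set" m] by simp

lemma fin_len: "finite {x::bool list. length x = m}"
  using finite_lists_length_eq[of "UNIV :: bool set" m] by simp

lemma cutset:
  assumes sch: "is_scheme K a b B m L phi psi mu" and K: "2 * t < K" and a: "a \<ge> 1" and b: "b \<ge> 1"
  shows "B * (t * (2*a+b)) \<le> m * t + L * (2*a+b)"
proof -
  define n where "n = 2*a+b"
  define c where "c = 2*(a+b)"
  define N where "N = K*(a+b)"
  have cpos: "c > 0" "n < c" using a b by (auto simp: c_def n_def)
  define A where "A = {..<t} \<times> {..<n}"
  define G where "G = PiE A (\<lambda>_. {xs::bool list. length xs = B})"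
  define C1 where "C1 = {xs. set xs \<subseteq> {x::bool list. length x = m} \<and> length xs = t}"
  define C2 where "C2 = {xs. set xs \<subseteq> {x::bool list. length x = L} \<and> length xs = n}"
  define E where "E g = (map (\<lambda>i. phi (2*i+1) (Wf N B c t n g)) [0..<t],
                          map (\<lambda>j. psi (dem K a b j) (Wf N B c t n g)) [0..<n])" for g
  have fc: "Wf N B c t n g \<in> file_configs N B" if "g \<in> G" for g
    unfolding file_configs_def
  proof (intro CollectI allI conjI impI)
    fix f assume f: "f \<in> {1..N}"
    show "length (Wf N B c t n g f) = B"
    proof (cases "(f-1) div c < t \<and> (f-1) mod c < n")
      case True
      then have "((f-1) div c, (f-1) mod c) \<in> A" by (simp add: A_def)
      then show ?thesis using that f True unfolding G_def Wf_def by auto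
    qed (use f in \<open>auto simp: Wf_def\<close>)
  next
    fix f assume "f \<notin> {1..N}" then show "Wf N B c t n g f = []" by (auto simp: Wf_def)
  qed
  have dm: "dem K a b j \<in> demands K a b" if "j < n" for j
    using dem_ok[of j a b K] that a K by (simp add: n_def)
  have dec: "Wf N B c t n g (dem K a b j (2*i+1)) = g (i,j)" if "i < t" "j < n" for g i j
  proof -
    have d: "dem K a b j (2*i+1) = i*c + j + 1" using that K
      by (simp add: dem_def c_def algebra_simps)
    have "i*c + j + 1 \<le> (i+1)*c" using cpos that by simp
    also have "\<dots> \<le> t*c" using that by (intro mult_le_mono1) simp
    also have "\<dots> = (2*t)*(a+b)" by (simp add: c_def)
    also have "\<dots> \<le> N" unfolding N_def using K by (intro mult_le_mono1) simp
    finally have le: "i*c+j+1 \<le> N" .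
    have "(i*c+j) div c = i" "(i*c+j) mod c = j" using cpos that by auto
    then show ?thesis unfolding d Wf_def using le that by simp
  qed
  have user: "2*i+1 \<in> {1..K}" if "i < t" for i using that K by auto
  have rec: "mu (2*i+1) (dem K a b j) (phi (2*i+1) (Wf N B c t n g)) (psi (dem K a b j) (Wf N B c t n g)) = g (i,j)"
    if "g \<in> G" "i < t" "j < n" for g i j
    using sch fc[OF that(1)] dm[OF that(3)] user[OF that(2)] dec[OF that(2,3)]
    unfolding is_scheme_def N_def by auto
  have inj: "inj_on E G"
  proof (rule inj_onI)
    fix g1 g2 assume g1: "g1 \<in> G" and g2: "g2 \<in> G" and eq: "E g1 = E g2"
    show "g1 = g2"
    proof
      fix p
      show "g1 p = g2 p"
      proof (cases "p \<in> A")
        case True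
        then obtain i j where p: "p = (i,j)" "i < t" "j < n" by (auto simp: A_def)
        have "phi (2*i+1) (Wf N B c t n g1) = phi (2*i+1) (Wf N B c t n g2)"
          using arg_cong[OF eq, of "\<lambda>x. fst x ! i"] p by (simp add: E_def)
        moreover have "psi (dem K a b j) (Wf N B c t n g1) = psi (dem K a b j) (Wf N B c t n g2)"
          using arg_cong[OF eq, of "\<lambda>x. snd x ! j"] p by (simp add: E_def)
        ultimately show ?thesis using rec[OF g1 p(2,3)] rec[OF g2 p(2,3)] p(1) by simp
      next
        case False
        then show ?thesis using g1 g2 by (cases p) (auto simp: G_def PiE_def extensional_def)
      qed
    qed
  qed
  have mapsto: "E ` G \<subseteq> C1 \<times> C2"
  proof
    fix x assume "x \<in> E ` G"
    then obtain g where g: "g \<in> G" "x = E g" by auto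
    have "length (phi (2*i+1) (Wf N B c t n g)) = m" if "i < t" for i
      using sch fc[OF g(1)] user[OF that] unfolding is_scheme_def N_def by auto
    moreover have "length (psi (dem K a b j) (Wf N B c t n g)) = L" if "j < n" for j
      using sch fc[OF g(1)] dm[OF that] unfolding is_scheme_def N_def by auto
    ultimately show "x \<in> C1 \<times> C2" unfolding g(2) E_def C1_def C2_def by auto
  qed
  have finC: "finite (C1 \<times> C2)" unfolding C1_def C2_def
    using finite_lists_length_eq[OF fin_len] by auto
  have "card G \<le> card (C1 \<times> C2)" using card_inj_on_le[OF inj mapsto finC] .
  moreover have "card G = (2^B)^(t*n)"
    unfolding G_def by (simp add: card_PiE A_def card_len card_cartesian_product)
  moreover have "card (C1 \<times> C2) = (2^m)^t * (2^L)^n"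
    unfolding C1_def C2_def card_cartesian_product
    by (simp add: card_lists_length_eq[OF fin_len] card_len)
  ultimately have "(2::nat)^(B*(t*n)) \<le> 2^(m*t + L*n)"
    by (simp add: power_mult power_add)
  then show ?thesis unfolding n_def by simp
qed

theorem mainTheorem5:
  fixes K a b :: nat and M :: real
  assumes "K \<ge> 3" and "odd K" and "a \<ge> 1" and "b \<ge> 1" and "M \<ge> 0"
  shows "Rstar K a b M \<ge> (real K - 1) / 2 - (real K - 1) / (2 * (2 * real a + real b)) * M"
proof -
  define t where "t = K div 2"
  have Kt: "K = 2*t+1" using assms(2) by (simp add: t_def)
  define n where "n = 2*a+b"
  have npos: "real n > 0" using assms by (simp add: n_def)
  have bound: "(real K - 1) / 2 - (real K - 1) / (2 * (2 * real a + real b)) * M = real t - real t / real n * M"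
    using npos by (simp add: Kt n_def field_simps)
  define N where "N = K*(a+b)"
  have ne: "achievable_loads K a b M \<noteq> {}"
  proof -
    have "is_scheme K a b 1 0 N (\<lambda>k W. []) (\<lambda>d W. map (\<lambda>i. hd (W i)) [1..<N+1])
            (\<lambda>k d z x. if d k \<in> {1..N} then [x ! (d k - 1)] else [])"
      unfolding is_scheme_def
    proof (intro ballI conjI)
      fix W d k assume W: "W \<in> file_configs (K*(a+b)) 1" and "d \<in> demands K a b" and "k \<in> {1..K}"
      show "(if d k \<in> {1..N} then [map (\<lambda>i. hd (W i)) [1..<N+1] ! (d k - 1)] else []) = W (d k)"
      proof (cases "d k \<in> {1..N}")
        case True
        then have "length (W (d k)) = 1" using W by (simp add: file_configs_def N_def)
        then obtain x where "W (d k) = [x]" by (cases "W (d k)") auto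
        moreover have "(map (\<lambda>i. hd (W i)) [1..<N+1]) ! (d k - 1) = hd (W (d k))"
          using True by (subst nth_map) (auto simp del: upt_Suc simp: nth_upt)
        ultimately show ?thesis using True by (simp del: upt_Suc)
      next
        case False
        then show ?thesis using W by (simp add: file_configs_def N_def)
      qed
    qed auto
    then have "\<exists>phi psi mu. is_scheme K a b 1 0 N phi psi mu" by blast
    then have "real N / real (1::nat) \<in> achievable_loads K a b M"
      unfolding achievable_loads_def mem_Collect_eq
      apply (rule_tac x=1 in exI, rule_tac x=0 in exI, rule_tac x=N in exI)
      using assms(5) by simp
    then show ?thesis by blast
  qed
  have lb: "real t - real t / real n * M \<le> x" if xin: "x \<in> achievable_loads K a b M" for x
  proof -
    obtain B m L phi psi mu where x: "x = real L / real B" and B: "B \<ge> 1" and mM: "real m \<le> M * real B"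
      and s: "is_scheme K a b B m L phi psi mu"
      using xin unfolding achievable_loads_def by blast
    have "B * (t * n) \<le> m * t + L * n" using cutset[OF s _ assms(3) assms(4), of t] Kt by (simp add: n_def)
    then have h: "real B * (real t * real n) \<le> real m * real t + real L * real n"
      by (metis of_nat_add of_nat_le_iff of_nat_mult)
    have "real m * real t \<le> M * real B * real t" using mM by (simp add: mult_right_mono)
    with h have h2: "real B * (real t * real n) \<le> M * real B * real t + real L * real n" by linarith
    have Bp: "real B > 0" using B by simp
    have "real t - real t / real n * M = (real B * (real t * real n) - M * real B * real t) / (real B * real n)"
      using Bp npos by (simp add: field_simps)
    also have "\<dots> \<le> (real L * real n) / (real B * real n)"
      using h2 Bp npos by (intro divide_right_mono) auto
    also have "\<dots> = x" using npos by (simp add: x)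
    finally show ?thesis .
  qed
  show ?thesis unfolding Rstar_def bound using cInf_greatest[OF ne lb] by simp
qed

end
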